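(* In the setting of the context, fix two distinct exposures $d_k\neq d_l$. Let $\widehat{\tau_{HT}}(d_k,d_l)=\frac1N\big[\widehat{y^T_{HT}}(d_k)-\widehat{y^T_{HT}}(d_l)\big]$ and define $$\widehat{\mathrm{Var}}[\widehat{\tau_{HT}}(d_k,d_l)]=\frac{1}{N^2}\Big\{\widehat{\mathrm{Var}}[\widehat{y^T_{HT}}(d_k)]+\widehat{A_2}(d_k)+\widehat{\mathrm{Var}}[\widehat{y^T_{HT}}(d_l)]+\widehat{A_2}(d_l)-2\,\widehat{\mathrm{Cov}}_A[\widehat{y^T_{HT}}(d_k),\widehat{y^T_{HT}}(d_l)]\Big\},$$ with the component estimators defined in the context. Then $$\mathrm{E}\big[\widehat{\mathrm{Var}}[\widehat{\tau_{HT}}(d_k,d_l)]\big]\ \ge\ \mathrm{Var}\big[\widehat{\tau_{HT}}(d_k,d_l)\big].$$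
   Context: A finite population $U$ of units $i=1,\dots,N$. A random treatment assignment vector $\mathbf{Z}$ takes values in $\Omega=\{\mathbf{z}\in\{1,\dots,M\}^N:p_{\mathbf{z}}>0\}$ with known probabilities $p_{\mathbf{z}}$. An exposure mapping $f:\Omega\times\Theta\to\Delta=\{d_1,\dots,d_K\}$ with unit traits $\theta_i$ gives exposures $D_i=f(\mathbf{Z},\theta_i)$. Write $\pi_i(d)=\Pr(D_i=d)$, $\pi_{ij}(d,d')=\Pr(D_i=d,D_j=d')$, $\pi_{ij}(d)=\pi_{ij}(d,d)$ (so $\pi_{ii}(d)=\pi_i(d)$ and $\pi_{ii}(d,d')=0$ for $d\ne d'$); assume $0<\pi_i(d_k)<1$ for all $i,k$. Potential outcomes $y_i(d)$ are fixed reals; the observed outcome is $y_i(D_i)$. Convention: $0/0=0$. Definitions: $\widehat{y^T_{HT}}(d)=\sum_i \mathbf{I}(D_i=d)y_i(d)/\pi_i(d)$; $\widehat{\mathrm{Var}}[\widehat{y^T_{HT}}(d)]=\sum_{i\in U}\mathbf{I}(D_i=d)[1-\pi_i(d)]\big[y_i(d)/\pi_i(d)\big]^2+\sum_{i\in U}\sum_{j\in U\setminus\{i\}}\mathbf{I}(D_i=d)\mathbf{I}(D_j=d)\frac{\pi_{ij}(d)-\pi_i(d)\pi_j(d)}{\pi_{ij}(d)}\frac{y_i(d)}{\pi_i(d)}\frac{y_j(d)}{\pi_j(d)}$; $\widehat{A_2}(d)=\sum_{i\in U}\sum_{j\in U\setminus\{i\}:\ \pi_{ij}(d)=0}\Big[\frac{\mathbf{I}(D_i=d)y_i(d)^2}{2\pi_i(d)}+\frac{\mathbf{I}(D_j=d)y_j(d)^2}{2\pi_j(d)}\Big]$;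 $\widehat{\mathrm{Cov}}_A[\widehat{y^T_{HT}}(d_k),\widehat{y^T_{HT}}(d_l)]=\sum_{i\in U}\sum_{j\in U\setminus\{i\}:\pi_{ij}(d_k,d_l)>0}\frac{\mathbf{I}(D_i=d_k)\mathbf{I}(D_j=d_l)}{\pi_{ij}(d_k,d_l)}\frac{y_i(d_k)}{\pi_i(d_k)}\frac{y_j(d_l)}{\pi_j(d_l)}[\pi_{ij}(d_k,d_l)-\pi_i(d_k)\pi_j(d_l)]-\sum_{i\in U}\sum_{j\in U:\pi_{ij}(d_k,d_l)=0}\Big[\frac{\mathbf{I}(D_i=d_k)y_i(d_k)^2}{2\pi_i(d_k)}+\frac{\mathbf{I}(D_j=d_l)y_j(d_l)^2}{2\pi_j(d_l)}\Big]$. Expectations and variances are over the randomization distribution of $\mathbf{Z}$. *)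

theory Defs
  imports Complex_Main "HOL-Library.FuncSet"
begin

text \<open>Randomization distribution: a finite support Om of assignment vectors with
  probabilities p. Units are 0..N-1. D i z is the exposure of unit i under assignment z.
  y i d is the potential outcome of unit i under exposure d.\<close>

definition Expect :: "(nat \<Rightarrow> nat) set \<Rightarrow> ((nat \<Rightarrow> nat) \<Rightarrow> real) \<Rightarrow> ((nat \<Rightarrow> nat) \<Rightarrow> real) \<Rightarrow> real" where
  "Expect Om p X = (\<Sum>z\<in>Om. p z * X z)"

definition Vr :: "(nat \<Rightarrow> nat) set \<Rightarrow> ((nat \<Rightarrow> nat) \<Rightarrow> real) \<Rightarrow> ((nat \<Rightarrow> nat) \<Rightarrow> real) \<Rightarrow> real" where
  "Vr Om p X = Expect Om p (\<lambda>z. (X z - Expect Om p X)^2)"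

definition ind :: "bool \<Rightarrow> real" where
  "ind b = (if b then 1 else 0)"

definition pi1 :: "(nat \<Rightarrow> nat) set \<Rightarrow> ((nat \<Rightarrow> nat) \<Rightarrow> real) \<Rightarrow> (nat \<Rightarrow> (nat \<Rightarrow> nat) \<Rightarrow> 'd) \<Rightarrow> nat \<Rightarrow> 'd \<Rightarrow> real" where
  "pi1 Om p D i d = Expect Om p (\<lambda>z. ind (D i z = d))"

definition pi2 :: "(nat \<Rightarrow> nat) set \<Rightarrow> ((nat \<Rightarrow> nat) \<Rightarrow> real) \<Rightarrow> (nat \<Rightarrow> (nat \<Rightarrow> nat) \<Rightarrow> 'd) \<Rightarrow> nat \<Rightarrow> nat \<Rightarrow> 'd \<Rightarrow> 'd \<Rightarrow> real" where
  "pi2 Om p D i j d d' = Expect Om p (\<lambda>z. ind (D i z = d \<and> D j z = d'))"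

definition yHT :: "nat \<Rightarrow> (nat \<Rightarrow> nat) set \<Rightarrow> ((nat \<Rightarrow> nat) \<Rightarrow> real) \<Rightarrow> (nat \<Rightarrow> (nat \<Rightarrow> nat) \<Rightarrow> 'd) \<Rightarrow> (nat \<Rightarrow> 'd \<Rightarrow> real) \<Rightarrow> 'd \<Rightarrow> (nat \<Rightarrow> nat) \<Rightarrow> real" where
  "yHT N Om p D y d z = (\<Sum>i<N. ind (D i z = d) * y i d / pi1 Om p D i d)"

definition VarHat :: "nat \<Rightarrow> (nat \<Rightarrow> nat) set \<Rightarrow> ((nat \<Rightarrow> nat) \<Rightarrow> real) \<Rightarrow> (nat \<Rightarrow> (nat \<Rightarrow> nat) \<Rightarrow> 'd) \<Rightarrow> (nat \<Rightarrow> 'd \<Rightarrow> real) \<Rightarrow> 'd \<Rightarrow> (nat \<Rightarrow> nat) \<Rightarrow> real" where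
  "VarHat N Om p D y d z =
     (\<Sum>i<N. ind (D i z = d) * (1 - pi1 Om p D i d) * (y i d / pi1 Om p D i d)^2)
   + (\<Sum>i<N. \<Sum>j\<in>{..<N} - {i}. ind (D i z = d) * ind (D j z = d)
        * ((pi2 Om p D i j d d - pi1 Om p D i d * pi1 Om p D j d) / pi2 Om p D i j d d)
        * (y i d / pi1 Om p D i d) * (y j d / pi1 Om p D j d))"

definition A2Hat :: "nat \<Rightarrow> (nat \<Rightarrow> nat) set \<Rightarrow> ((nat \<Rightarrow> nat) \<Rightarrow> real) \<Rightarrow> (nat \<Rightarrow> (nat \<Rightarrow> nat) \<Rightarrow> 'd) \<Rightarrow> (nat \<Rightarrow> 'd \<Rightarrow> real) \<Rightarrow> 'd \<Rightarrow> (nat \<Rightarrow> nat) \<Rightarrow> real" where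
  "A2Hat N Om p D y d z =
     (\<Sum>i<N. \<Sum>j\<in>{j. j < N \<and> j \<noteq> i \<and> pi2 Om p D i j d d = 0}.
        ind (D i z = d) * (y i d)^2 / (2 * pi1 Om p D i d)
      + ind (D j z = d) * (y j d)^2 / (2 * pi1 Om p D j d))"

definition CovAHat :: "nat \<Rightarrow> (nat \<Rightarrow> nat) set \<Rightarrow> ((nat \<Rightarrow> nat) \<Rightarrow> real) \<Rightarrow> (nat \<Rightarrow> (nat \<Rightarrow> nat) \<Rightarrow> 'd) \<Rightarrow> (nat \<Rightarrow> 'd \<Rightarrow> real) \<Rightarrow> 'd \<Rightarrow> 'd \<Rightarrow> (nat \<Rightarrow> nat) \<Rightarrow> real" where
  "CovAHat N Om p D y dk dl z =
     (\<Sum>i<N. \<Sum>j\<in>{j. j < N \<and> j \<noteq> i \<and> pi2 Om p D i j dk dl > 0}.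
        ind (D i z = dk) * ind (D j z = dl) / pi2 Om p D i j dk dl
        * (y i dk / pi1 Om p D i dk) * (y j dl / pi1 Om p D j dl)
        * (pi2 Om p D i j dk dl - pi1 Om p D i dk * pi1 Om p D j dl))
   - (\<Sum>i<N. \<Sum>j\<in>{j. j < N \<and> pi2 Om p D i j dk dl = 0}.
        ind (D i z = dk) * (y i dk)^2 / (2 * pi1 Om p D i dk)
      + ind (D j z = dl) * (y j dl)^2 / (2 * pi1 Om p D j dl))"

definition tauHT :: "nat \<Rightarrow> (nat \<Rightarrow> nat) set \<Rightarrow> ((nat \<Rightarrow> nat) \<Rightarrow> real) \<Rightarrow> (nat \<Rightarrow> (nat \<Rightarrow> nat) \<Rightarrow> 'd) \<Rightarrow> (nat \<Rightarrow> 'd \<Rightarrow> real) \<Rightarrow> 'd \<Rightarrow> 'd \<Rightarrow> (nat \<Rightarrow> nat) \<Rightarrow> real" where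
  "tauHT N Om p D y dk dl z = (yHT N Om p D y dk z - yHT N Om p D y dl z) / real N"

definition VarTauHat :: "nat \<Rightarrow> (nat \<Rightarrow> nat) set \<Rightarrow> ((nat \<Rightarrow> nat) \<Rightarrow> real) \<Rightarrow> (nat \<Rightarrow> (nat \<Rightarrow> nat) \<Rightarrow> 'd) \<Rightarrow> (nat \<Rightarrow> 'd \<Rightarrow> real) \<Rightarrow> 'd \<Rightarrow> 'd \<Rightarrow> (nat \<Rightarrow> nat) \<Rightarrow> real" where
  "VarTauHat N Om p D y dk dl z =
     (VarHat N Om p D y dk z + A2Hat N Om p D y dk z
      + VarHat N Om p D y dl z + A2Hat N Om p D y dl z
      - 2 * CovAHat N Om p D y dk dl z) / (real N)^2"

end

theory Submission
  imports Defs
begin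

lemma ind_mult: "ind a * ind b = ind (a \<and> b)" by (simp add: ind_def)

lemma Expect_add: "Expect Om p (\<lambda>z. f z + g z) = Expect Om p f + Expect Om p g"
  by (simp add: Expect_def distrib_left sum.distrib)
lemma Expect_diff: "Expect Om p (\<lambda>z. f z - g z) = Expect Om p f - Expect Om p g"
  by (simp add: Expect_def right_diff_distrib sum_subtractf)
lemma Expect_sum: "Expect Om p (\<lambda>z. \<Sum>i\<in>A. f i z) = (\<Sum>i\<in>A. Expect Om p (f i))"
  unfolding Expect_def sum_distrib_left by (rule sum.swap)
lemma Expect_multc: "Expect Om p (\<lambda>z. f z * c) = Expect Om p f * c"
  by (simp add: Expect_def sum_distrib_right mult.assoc)
lemma Expect_cmult: "Expect Om p (\<lambda>z. c * f z) = c * Expect Om p f"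
  by (simp add: Expect_def sum_distrib_left algebra_simps)
lemma Expect_divc: "Expect Om p (\<lambda>z. f z / c) = Expect Om p f / c"
  by (simp add: Expect_def sum_divide_distrib)
lemma Expect_const: "sum p Om = 1 \<Longrightarrow> Expect Om p (\<lambda>z. c) = c"
  by (simp add: Expect_def sum_distrib_right[symmetric])
lemma Expect_ind1: "Expect Om p (\<lambda>z. ind (D i z = d)) = pi1 Om p D i d"
  by (simp add: pi1_def)
lemma Expect_ind2: "Expect Om p (\<lambda>z. ind (D i z = d) * ind (D j z = d')) = pi2 Om p D i j d d'"
  by (simp add: pi2_def ind_mult)

lemma Vr_alt: assumes "sum p Om = 1"
  shows "Vr Om p X = Expect Om p (\<lambda>z. (X z)^2) - (Expect Om p X)^2"
proof -
  define m where "m = Expect Om p X"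
  have "(\<lambda>z. (X z - m)^2) = (\<lambda>z. ((X z)^2 - (2*m) * X z) + m^2)"
    by (rule ext) (simp add: power2_diff)
  then have "Vr Om p X = Expect Om p (\<lambda>z. (X z)^2) - 2*m*m + m^2"
    unfolding Vr_def m_def[symmetric] by (simp only: Expect_add Expect_diff Expect_cmult Expect_const assms m_def)
  then show ?thesis by (simp add: m_def power2_eq_square)
qed

lemma sq_sum: "(\<Sum>i\<in>A. a i :: real)^2 = (\<Sum>i\<in>A. \<Sum>j\<in>A. a i * a j)"
  by (simp add: power2_eq_square sum_product)

lemma L1:
  fixes D :: "nat \<Rightarrow> (nat \<Rightarrow> nat) \<Rightarrow> 'd"
  assumes ps: "sum p Om = 1" and pos: "\<forall>i<N. pi1 Om p D i d > 0"
  shows "Vr Om p (yHT N Om p D y d) \<le> Expect Om p (VarHat N Om p D y d) + Expect Om p (A2Hat N Om p D y d)"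
proof -
  define \<pi> where "\<pi> i = pi1 Om p D i d" for i
  define P where "P i j = pi2 Om p D i j d d" for i j
  define u where "u i = y i d / \<pi> i" for i
  have X: "yHT N Om p D y d = (\<lambda>z. \<Sum>i<N. ind (D i z = d) * u i)"
    by (rule ext) (simp add: yHT_def u_def \<pi>_def)
  have EX: "Expect Om p (yHT N Om p D y d) = (\<Sum>i<N. \<pi> i * u i)"
    by (simp add: X Expect_sum Expect_multc Expect_ind1 \<pi>_def)
  have X2: "(\<lambda>z. (yHT N Om p D y d z)^2) = (\<lambda>z. \<Sum>i<N. \<Sum>j<N. (ind (D i z = d) * ind (D j z = d)) * (u i * u j))"
    by (rule ext) (simp add: X sq_sum algebra_simps)
  have EX2: "Expect Om p (\<lambda>z. (yHT N Om p D y d z)^2) = (\<Sum>i<N. \<Sum>j<N. P i j * (u i * u j))"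
    unfolding X2 by (simp only: Expect_sum Expect_multc Expect_ind2 P_def)
  have VX: "Vr Om p (yHT N Om p D y d) = (\<Sum>i<N. \<Sum>j<N. (P i j - \<pi> i * \<pi> j) * (u i * u j))"
    unfolding Vr_alt[OF ps] EX2 EX sq_sum
    by (simp add: sum_subtractf[symmetric] algebra_simps)
  have EV: "Expect Om p (VarHat N Om p D y d) = (\<Sum>i<N. \<pi> i * ((1 - \<pi> i) * (u i)^2))
     + (\<Sum>i<N. \<Sum>j\<in>{..<N} - {i}. P i j * ((P i j - \<pi> i * \<pi> j) / P i j * u i * u j))"
    unfolding VarHat_def
    by (simp only: Expect_add Expect_sum mult.assoc[symmetric] Expect_multc Expect_divc Expect_ind1 Expect_ind2 
         \<pi>_def[symmetric] P_def[symmetric] u_def[symmetric])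
  have EA: "Expect Om p (A2Hat N Om p D y d) = (\<Sum>i<N. \<Sum>j\<in>{j. j < N \<and> j \<noteq> i \<and> P i j = 0}. 
      \<pi> i * (y i d)^2 / (2 * \<pi> i) + \<pi> j * (y j d)^2 / (2 * \<pi> j))"
    unfolding A2Hat_def
    by (simp only: Expect_add Expect_sum Expect_multc Expect_divc Expect_ind1 
         \<pi>_def[symmetric] P_def[symmetric])
  have pi_nz: "\<pi> i \<noteq> 0" if "i < N" for i using pos that \<pi>_def by auto
  have Pii: "P i i = \<pi> i" for i by (simp add: P_def \<pi>_def pi1_def pi2_def)
  have Seq: "{j. j < N \<and> j \<noteq> i \<and> P i j = 0} = {j\<in>{..<N} - {i}. P i j = 0}" for i by auto
  have VX': "Vr Om p (yHT N Om p D y d) = (\<Sum>i<N. (P i i - \<pi> i * \<pi> i) * (u i * u i)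
      + (\<Sum>j\<in>{..<N} - {i}. (P i j - \<pi> i * \<pi> j) * (u i * u j)))"
    unfolding VX by (rule sum.cong) (auto simp: sum.remove)
  have EA': "Expect Om p (A2Hat N Om p D y d) = (\<Sum>i<N. \<Sum>j\<in>{..<N} - {i}. 
      if P i j = 0 then \<pi> i * (y i d)^2 / (2 * \<pi> i) + \<pi> j * (y j d)^2 / (2 * \<pi> j) else 0)"
    unfolding EA
  proof (rule sum.cong[OF refl])
    fix i show "(\<Sum>j\<in>{j. j < N \<and> j \<noteq> i \<and> P i j = 0}. \<pi> i * (y i d)^2 / (2 * \<pi> i) + \<pi> j * (y j d)^2 / (2 * \<pi> j)) = 
      (\<Sum>j\<in>{..<N} - {i}. if P i j = 0 then \<pi> i * (y i d)^2 / (2 * \<pi> i) + \<pi> j * (y j d)^2 / (2 * \<pi> j) else 0)"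
      unfolding Seq by (rule sum.inter_filter) simp
  qed
  have "Vr Om p (yHT N Om p D y d) \<le> (\<Sum>i<N. \<pi> i * ((1 - \<pi> i) * (u i)^2)
     + ((\<Sum>j\<in>{..<N} - {i}. P i j * ((P i j - \<pi> i * \<pi> j) / P i j * u i * u j))
     + (\<Sum>j\<in>{..<N} - {i}. 
      if P i j = 0 then \<pi> i * (y i d)^2 / (2 * \<pi> i) + \<pi> j * (y j d)^2 / (2 * \<pi> j) else 0)))"
    unfolding VX'
  proof (rule sum_mono)
    fix i assume i: "i \<in> {..<N}"
    have "(\<Sum>j\<in>{..<N} - {i}. (P i j - \<pi> i * \<pi> j) * (u i * u j))
       \<le> (\<Sum>j\<in>{..<N} - {i}. P i j * ((P i j - \<pi> i * \<pi> j) / P i j * u i * u j) +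
          (if P i j = 0 then \<pi> i * (y i d)^2 / (2 * \<pi> i) + \<pi> j * (y j d)^2 / (2 * \<pi> j) else 0))"
    proof (rule sum_mono)
      fix j assume j: "j \<in> {..<N} - {i}"
      show "(P i j - \<pi> i * \<pi> j) * (u i * u j)
       \<le> P i j * ((P i j - \<pi> i * \<pi> j) / P i j * u i * u j) +
          (if P i j = 0 then \<pi> i * (y i d)^2 / (2 * \<pi> i) + \<pi> j * (y j d)^2 / (2 * \<pi> j) else 0)"
      proof (cases "P i j = 0")
        case True
        have "0 \<le> (y i d + y j d)^2 / 2" by simp
        then show ?thesis using True pi_nz[of i] pi_nz[of j] i j
          by (simp add: u_def field_simps power2_eq_square)
      next
        case False then show ?thesis by simp
      qed
    qed
    then show "(P i i - \<pi> i * \<pi> i) * (u i * u i) + (\<Sum>j\<in>{..<N} - {i}. (P i j - \<pi> i * \<pi> j) * (u i * u j))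
      \<le> \<pi> i * ((1 - \<pi> i) * (u i)^2) + ((\<Sum>j\<in>{..<N} - {i}. P i j * ((P i j - \<pi> i * \<pi> j) / P i j * u i * u j))
     + (\<Sum>j\<in>{..<N} - {i}. 
      if P i j = 0 then \<pi> i * (y i d)^2 / (2 * \<pi> i) + \<pi> j * (y j d)^2 / (2 * \<pi> j) else 0))"
      by (simp add: Pii sum.distrib algebra_simps power2_eq_square)
  qed
  also have "\<dots> = Expect Om p (VarHat N Om p D y d) + Expect Om p (A2Hat N Om p D y d)"
    unfolding EV EA' by (simp add: sum.distrib)
  finally show ?thesis .
qed

lemma L2:
  fixes D :: "nat \<Rightarrow> (nat \<Rightarrow> nat) \<Rightarrow> 'd"
  assumes ps: "sum p Om = 1" and posk: "\<forall>i<N. pi1 Om p D i dk > 0" and posl: "\<forall>i<N. pi1 Om p D i dl > 0"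
    and pnn: "\<forall>z\<in>Om. p z \<ge> 0" and dkl: "dk \<noteq> dl"
  shows "Expect Om p (CovAHat N Om p D y dk dl) \<le> Expect Om p (\<lambda>z. yHT N Om p D y dk z * yHT N Om p D y dl z)
     - Expect Om p (yHT N Om p D y dk) * Expect Om p (yHT N Om p D y dl)"
proof -
  define \<pi> where "\<pi> i = pi1 Om p D i dk" for i
  define \<rho> where "\<rho> i = pi1 Om p D i dl" for i
  define R where "R i j = pi2 Om p D i j dk dl" for i j
  define u where "u i = y i dk / \<pi> i" for i
  define v where "v i = y i dl / \<rho> i" for i
  have X: "yHT N Om p D y dk = (\<lambda>z. \<Sum>i<N. ind (D i z = dk) * u i)"
    by (rule ext) (simp add: yHT_def u_def \<pi>_def)
  have Y: "yHT N Om p D y dl = (\<lambda>z. \<Sum>i<N. ind (D i z = dl) * v i)"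
    by (rule ext) (simp add: yHT_def v_def \<rho>_def)
  have EX: "Expect Om p (yHT N Om p D y dk) = (\<Sum>i<N. \<pi> i * u i)"
    by (simp add: X Expect_sum Expect_multc Expect_ind1 \<pi>_def)
  have EY: "Expect Om p (yHT N Om p D y dl) = (\<Sum>i<N. \<rho> i * v i)"
    by (simp add: Y Expect_sum Expect_multc Expect_ind1 \<rho>_def)
  have XY: "(\<lambda>z. yHT N Om p D y dk z * yHT N Om p D y dl z) = (\<lambda>z. \<Sum>i<N. \<Sum>j<N. (ind (D i z = dk) * ind (D j z = dl)) * (u i * v j))"
    by (rule ext) (simp add: X Y sum_product algebra_simps)
  have EXY: "Expect Om p (\<lambda>z. yHT N Om p D y dk z * yHT N Om p D y dl z) = (\<Sum>i<N. \<Sum>j<N. R i j * (u i * v j))"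
    unfolding XY by (simp only: Expect_sum Expect_multc Expect_ind2 R_def)
  have Cov: "Expect Om p (\<lambda>z. yHT N Om p D y dk z * yHT N Om p D y dl z)
     - Expect Om p (yHT N Om p D y dk) * Expect Om p (yHT N Om p D y dl) = (\<Sum>i<N. \<Sum>j<N. (R i j - \<pi> i * \<rho> j) * (u i * v j))"
    unfolding EXY EX EY sum_product
    by (simp add: sum_subtractf[symmetric] algebra_simps)
  have Rnn: "R i j \<ge> 0" for i j
    unfolding R_def pi2_def Expect_def using pnn by (intro sum_nonneg) (auto simp: ind_def)
  have Rii: "R i i = 0" for i
    unfolding R_def pi2_def Expect_def using dkl by (auto simp: ind_def intro!: sum.neutral)
  have S1: "{j. j < N \<and> j \<noteq> i \<and> R i j > 0} = {j\<in>{..<N}. R i j > 0}" for i using Rii by auto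
  have S2: "{j. j < N \<and> R i j = 0} = {j\<in>{..<N}. R i j = 0}" for i by auto
  have EC: "Expect Om p (CovAHat N Om p D y dk dl) = 
     (\<Sum>i<N. \<Sum>j\<in>{j. j < N \<and> j \<noteq> i \<and> R i j > 0}. R i j / R i j * u i * v j * (R i j - \<pi> i * \<rho> j))
   - (\<Sum>i<N. \<Sum>j\<in>{j. j < N \<and> R i j = 0}. \<pi> i * (y i dk)^2 / (2 * \<pi> i) + \<rho> j * (y j dl)^2 / (2 * \<rho> j))"
    unfolding CovAHat_def
    by (simp only: Expect_add Expect_diff Expect_sum Expect_multc Expect_divc Expect_ind1 Expect_ind2
         \<pi>_def[symmetric] \<rho>_def[symmetric] R_def[symmetric] u_def[symmetric] v_def[symmetric])
  also have "\<dots> = (\<Sum>i<N. \<Sum>j<N. (if R i j > 0 then R i j / R i j * u i * v j * (R i j - \<pi> i * \<rho> j) else 0)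
     - (if R i j = 0 then \<pi> i * (y i dk)^2 / (2 * \<pi> i) + \<rho> j * (y j dl)^2 / (2 * \<rho> j) else 0))"
    by (simp only: S1 S2 sum.inter_filter[OF finite_lessThan] sum_subtractf)
  also have "\<dots> \<le> (\<Sum>i<N. \<Sum>j<N. (R i j - \<pi> i * \<rho> j) * (u i * v j))"
  proof (intro sum_mono)
    fix i j assume i: "i \<in> {..<N}" and j: "j \<in> {..<N}"
    have pi: "\<pi> i \<noteq> 0" using posk i \<pi>_def by auto
    have rj: "\<rho> j \<noteq> 0" using posl j \<rho>_def by auto
    show "(if R i j > 0 then R i j / R i j * u i * v j * (R i j - \<pi> i * \<rho> j) else 0)
     - (if R i j = 0 then \<pi> i * (y i dk)^2 / (2 * \<pi> i) + \<rho> j * (y j dl)^2 / (2 * \<rho> j) else 0)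
      \<le> (R i j - \<pi> i * \<rho> j) * (u i * v j)"
    proof (cases "R i j = 0")
      case True
      have "0 \<le> (y i dk - y j dl)^2 / 2" by simp
      then show ?thesis using True pi rj
        by (simp add: u_def v_def field_simps power2_eq_square)
    next
      case False then have "R i j > 0" using Rnn[of i j] by auto
      then show ?thesis by simp
    qed
  qed
  also have "\<dots> = Expect Om p (\<lambda>z. yHT N Om p D y dk z * yHT N Om p D y dl z)
     - Expect Om p (yHT N Om p D y dk) * Expect Om p (yHT N Om p D y dl)" using Cov by simp
  finally show ?thesis .
qed

lemma Vr_div: "Vr Om p (\<lambda>z. W z / c) = Vr Om p W / c^2"
proof -
  have "(\<lambda>z. (W z / c - Expect Om p W / c)^2) = (\<lambda>z. (W z - Expect Om p W)^2 / c^2)"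
    by (rule ext) (simp add: diff_divide_distrib[symmetric] power_divide)
  then show ?thesis unfolding Vr_def Expect_divc by (simp add: Expect_divc)
qed

lemma Vr_diff: assumes ps: "sum p Om = 1"
  shows "Vr Om p (\<lambda>z. X z - Y z) = Vr Om p X + Vr Om p Y - 2 * (Expect Om p (\<lambda>z. X z * Y z) - Expect Om p X * Expect Om p Y)"
proof -
  have "(\<lambda>z. (X z - Y z)^2) = (\<lambda>z. ((X z)^2 - 2 * (X z * Y z)) + (Y z)^2)"
    by (rule ext) (simp add: power2_diff)
  then have e1: "Expect Om p (\<lambda>z. (X z - Y z)^2) = Expect Om p (\<lambda>z. (X z)^2) - 2 * Expect Om p (\<lambda>z. X z * Y z) + Expect Om p (\<lambda>z. (Y z)^2)"
    by (simp only: Expect_add Expect_diff Expect_cmult)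
  have e2: "Expect Om p (\<lambda>z. X z - Y z) = Expect Om p X - Expect Om p Y" by (rule Expect_diff)
  show ?thesis unfolding Vr_alt[OF ps] e1 e2
    by (simp add: power2_diff algebra_simps)
qed

theorem mainTheorem3:
  fixes N M :: nat
    and Om :: "(nat \<Rightarrow> nat) set"
    and p :: "(nat \<Rightarrow> nat) \<Rightarrow> real"
    and f :: "(nat \<Rightarrow> nat) \<Rightarrow> 'th \<Rightarrow> 'd"
    and \<theta> :: "nat \<Rightarrow> 'th"
    and Delta :: "'d set"
    and y :: "nat \<Rightarrow> 'd \<Rightarrow> real"
    and dk dl :: 'd
  defines "D \<equiv> (\<lambda>i z. f z (\<theta> i))"
  assumes Om_sub: "Om \<subseteq> PiE {..<N} (\<lambda>_. {1..M})"
    and p_pos: "\<forall>z\<in>Om. p z > 0"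
    and p_sum: "(\<Sum>z\<in>Om. p z) = 1"
    and Delta_fin: "finite Delta"
    and f_range: "\<forall>z\<in>Om. \<forall>i<N. f z (\<theta> i) \<in> Delta"
    and pi_bounds: "\<forall>i<N. \<forall>d\<in>Delta. 0 < pi1 Om p D i d \<and> pi1 Om p D i d < 1"
    and dk_in: "dk \<in> Delta" and dl_in: "dl \<in> Delta"
    and dkl: "dk \<noteq> dl"
  shows "Expect Om p (VarTauHat N Om p D y dk dl) \<ge> Vr Om p (tauHT N Om p D y dk dl)"
proof -
  have ps: "sum p Om = 1" using p_sum by simp
  have posk: "\<forall>i<N. pi1 Om p D i dk > 0" using pi_bounds dk_in by auto
  have posl: "\<forall>i<N. pi1 Om p D i dl > 0" using pi_bounds dl_in by auto
  have pnn: "\<forall>z\<in>Om. p z \<ge> 0" using p_pos by auto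
  let ?X = "yHT N Om p D y dk" and ?Y = "yHT N Om p D y dl"
  note h1 = L1[OF ps posk, of y]
  note h2 = L1[OF ps posl, of y]
  note h3 = L2[OF ps posk posl pnn dkl, of y]
  have "tauHT N Om p D y dk dl = (\<lambda>z. (?X z - ?Y z) / real N)"
    by (rule ext) (simp add: tauHT_def)
  then have V: "Vr Om p (tauHT N Om p D y dk dl) = (Vr Om p ?X + Vr Om p ?Y
      - 2 * (Expect Om p (\<lambda>z. ?X z * ?Y z) - Expect Om p ?X * Expect Om p ?Y)) / (real N)^2"
    by (simp add: Vr_div Vr_diff[OF ps])
  have E: "Expect Om p (VarTauHat N Om p D y dk dl) = (Expect Om p (VarHat N Om p D y dk) + Expect Om p (A2Hat N Om p D y dk)
      + Expect Om p (VarHat N Om p D y dl) + Expect Om p (A2Hat N Om p D y dl)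
      - 2 * Expect Om p (CovAHat N Om p D y dk dl)) / (real N)^2"
    unfolding VarTauHat_def by (simp only: Expect_divc Expect_add Expect_diff Expect_cmult)
  have num: "Vr Om p ?X + Vr Om p ?Y
      - 2 * (Expect Om p (\<lambda>z. ?X z * ?Y z) - Expect Om p ?X * Expect Om p ?Y) \<le> Expect Om p (VarHat N Om p D y dk) + Expect Om p (A2Hat N Om p D y dk)
      + Expect Om p (VarHat N Om p D y dl) + Expect Om p (A2Hat N Om p D y dl)
      - 2 * Expect Om p (CovAHat N Om p D y dk dl)" using h1 h2 h3 by (smt (verit))
  show ?thesis unfolding V E
    by (rule divide_right_mono[OF num]) simp
qed

end
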